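(* Let $\mathcal M_{AI}$ be the category whose objects are countable discrete metric spaces of bounded geometry and whose morphisms are almost isometries. Then $f\mapsto M_{d_f}$ is a functor from $\mathcal M_{AI}$ to $\mathcal M$: for almost isometries $f:X\to Y$, $g:Y\to Z$ between bounded geometry spaces, $M_{d_{g\circ f}}(X,Z)=M_{d_f}(X,Y)\hat\otimes M_{d_g}(Y,Z)=M_{d_g\circ d_f}(X,Z)$, and $M_{d_{\mathrm{id}_X}}(X,X)=C^*_u(X)$.
   Context: Bounded geometry: for every $R>0$ the number of points in balls of radius $R$ is finite and uniformly bounded. An almost isometry $f:X\to Y$ satisfies $d_X(x,x')-C\le d_Y(f(x),f(x'))\le d_X(x,x')+C$ for some $C>0$; $d_f$ is the metric on $X\sqcup Y$ extending $d_X,d_Y$ with $d_f(x,y)=\inf_{\tilde x\in X}(d_X(x,\tilde x)+C/2+d_Y(f(\tilde x),y))$. $\mathcal M$ is the category whose objects are countable discrete metric spaces and whose morphisms $X\to Y$ are the spaces $M_d(X,Y)$, $d$ a metric on $X\sqcup Y$ extending $d_X,d_Y$, where $M_d(X,Y)$ is the norm closure in $\mathbb B(l^2(X),l^2(Y))$ of bounded operators $T$ of finite propagation (i.e. $\langle T\delta_x,\delta_y\rangle=0$ whenever $d(x,y)\ge L$, for some $L$); composition is $(M_{d_1}(X,Y),M_{d_2}(Y,Z))\mapsto M_{d_2\circ d_1}(X,Z)$, with $(d_2\circ d_1)(x,z)=\inf_y(d_1(x,y)+d_2(y,z))$. $M\hat\otimes N$ is the norm closure of the span of compositions $S\circ T$,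 $T\in M$, $S\in N$. $C^*_u(X)$ is the uniform Roe algebra (norm closure of finite-propagation bounded operators on $l^2(X)$). *)

theory Defs
  imports "HOL-Analysis.Analysis"
begin

definition metric_on :: "'a set \<Rightarrow> ('a \<Rightarrow> 'a \<Rightarrow> real) \<Rightarrow> bool" where
  "metric_on S d \<longleftrightarrow>
     (\<forall>x\<in>S. \<forall>y\<in>S. 0 \<le> d x y \<and> (d x y = 0 \<longleftrightarrow> x = y) \<and> d x y = d y x) \<and>
     (\<forall>x\<in>S. \<forall>y\<in>S. \<forall>z\<in>S. d x z \<le> d x y + d y z)"

definition countable_discrete_metric :: "'a set \<Rightarrow> ('a \<Rightarrow> 'a \<Rightarrow> real) \<Rightarrow> bool" where
  "countable_discrete_metric S d \<longleftrightarrow> metric_on S d \<and> countable S \<and>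
     (\<forall>x\<in>S. \<exists>e>0. \<forall>y\<in>S. d x y < e \<longrightarrow> y = x)"

definition bounded_geometry :: "'a set \<Rightarrow> ('a \<Rightarrow> 'a \<Rightarrow> real) \<Rightarrow> bool" where
  "bounded_geometry S d \<longleftrightarrow>
     (\<forall>R>0. \<exists>N::nat. \<forall>x\<in>S. finite {y\<in>S. d x y \<le> R} \<and> card {y\<in>S. d x y \<le> R} \<le> N)"

definition almost_isometry ::
  "'a set \<Rightarrow> ('a \<Rightarrow> 'a \<Rightarrow> real) \<Rightarrow> 'b set \<Rightarrow> ('b \<Rightarrow> 'b \<Rightarrow> real) \<Rightarrow> real \<Rightarrow> ('a \<Rightarrow> 'b) \<Rightarrow> bool" where
  "almost_isometry X dX Y dY C f \<longleftrightarrow> C > 0 \<and> f ` X \<subseteq> Y \<and>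
     (\<forall>x\<in>X. \<forall>x'\<in>X. dX x x' - C \<le> dY (f x) (f x') \<and> dY (f x) (f x') \<le> dX x x' + C)"

text \<open>The metric d_f on the disjoint union X \<squnion> Y (modelled by the sum type).\<close>
fun dist_f ::
  "'a set \<Rightarrow> ('a \<Rightarrow> 'a \<Rightarrow> real) \<Rightarrow> ('b \<Rightarrow> 'b \<Rightarrow> real) \<Rightarrow> real \<Rightarrow> ('a \<Rightarrow> 'b)
    \<Rightarrow> 'a + 'b \<Rightarrow> 'a + 'b \<Rightarrow> real" where
  "dist_f X dX dY C f (Inl x) (Inl x') = dX x x'"
| "dist_f X dX dY C f (Inr y) (Inr y') = dY y y'"
| "dist_f X dX dY C f (Inl x) (Inr y) = (INF x'\<in>X. dX x x' + C / 2 + dY (f x') y)"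
| "dist_f X dX dY C f (Inr y) (Inl x) = (INF x'\<in>X. dX x x' + C / 2 + dY (f x') y)"

fun metric_comp ::
  "'b set \<Rightarrow> ('a + 'b \<Rightarrow> 'a + 'b \<Rightarrow> real) \<Rightarrow> ('b + 'c \<Rightarrow> 'b + 'c \<Rightarrow> real)
    \<Rightarrow> 'a + 'c \<Rightarrow> 'a + 'c \<Rightarrow> real" where
  "metric_comp Y d1 d2 (Inl x) (Inl x') = d1 (Inl x) (Inl x')"
| "metric_comp Y d1 d2 (Inr z) (Inr z') = d2 (Inr z) (Inr z')"
| "metric_comp Y d1 d2 (Inl x) (Inr z) = (INF y\<in>Y. d1 (Inl x) (Inr y) + d2 (Inl y) (Inr z))"
| "metric_comp Y d1 d2 (Inr z) (Inl x) = (INF y\<in>Y. d1 (Inl x) (Inr y) + d2 (Inl y) (Inr z))"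

definition l2 :: "'a set \<Rightarrow> ('a \<Rightarrow> complex) set" where
  "l2 X = {v. (\<forall>x. x \<notin> X \<longrightarrow> v x = 0) \<and> (\<lambda>x. (cmod (v x))\<^sup>2) summable_on X}"

definition l2norm :: "'a set \<Rightarrow> ('a \<Rightarrow> complex) \<Rightarrow> real" where
  "l2norm X v = sqrt (\<Sum>\<^sub>\<infinity>x\<in>X. (cmod (v x))\<^sup>2)"

definition bounded_op :: "'a set \<Rightarrow> 'b set \<Rightarrow> (('a \<Rightarrow> complex) \<Rightarrow> ('b \<Rightarrow> complex)) \<Rightarrow> bool" where
  "bounded_op X Y T \<longleftrightarrow>
     (\<forall>v\<in>l2 X. T v \<in> l2 Y) \<and>
     (\<forall>v. v \<notin> l2 X \<longrightarrow> T v = (\<lambda>_. 0)) \<and>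
     (\<forall>u\<in>l2 X. \<forall>v\<in>l2 X. \<forall>a b. T (\<lambda>x. a * u x + b * v x) = (\<lambda>y. a * T u y + b * T v y)) \<and>
     (\<exists>K. \<forall>v\<in>l2 X. l2norm Y (T v) \<le> K * l2norm X v)"

definition opnorm :: "'a set \<Rightarrow> 'b set \<Rightarrow> (('a \<Rightarrow> complex) \<Rightarrow> ('b \<Rightarrow> complex)) \<Rightarrow> real" where
  "opnorm X Y T = (SUP v\<in>{v\<in>l2 X. l2norm X v \<le> 1}. l2norm Y (T v))"

definition op_closure ::
  "'a set \<Rightarrow> 'b set \<Rightarrow> (('a \<Rightarrow> complex) \<Rightarrow> ('b \<Rightarrow> complex)) set
    \<Rightarrow> (('a \<Rightarrow> complex) \<Rightarrow> ('b \<Rightarrow> complex)) set" where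
  "op_closure X Y A = {T. bounded_op X Y T \<and>
      (\<forall>e>0. \<exists>S\<in>A. opnorm X Y (\<lambda>v y. T v y - S v y) < e)}"

text \<open>Delta function and matrix coefficient <T \<delta>_x, \<delta>_y> = (T \<delta>_x)(y).\<close>
definition delta :: "'a \<Rightarrow> 'a \<Rightarrow> complex" where
  "delta x = (\<lambda>x'. if x' = x then 1 else 0)"

definition finite_propagation ::
  "'a set \<Rightarrow> 'b set \<Rightarrow> ('a + 'b \<Rightarrow> 'a + 'b \<Rightarrow> real) \<Rightarrow> (('a \<Rightarrow> complex) \<Rightarrow> ('b \<Rightarrow> complex)) \<Rightarrow> bool" where
  "finite_propagation X Y d T \<longleftrightarrow>
     (\<exists>L. \<forall>x\<in>X. \<forall>y\<in>Y. d (Inl x) (Inr y) \<ge> L \<longrightarrow> T (delta x) y = 0)"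

definition M_d ::
  "'a set \<Rightarrow> 'b set \<Rightarrow> ('a + 'b \<Rightarrow> 'a + 'b \<Rightarrow> real) \<Rightarrow> (('a \<Rightarrow> complex) \<Rightarrow> ('b \<Rightarrow> complex)) set" where
  "M_d X Y d = op_closure X Y {T. bounded_op X Y T \<and> finite_propagation X Y d T}"

definition uniform_roe :: "'a set \<Rightarrow> ('a \<Rightarrow> 'a \<Rightarrow> real) \<Rightarrow> (('a \<Rightarrow> complex) \<Rightarrow> ('a \<Rightarrow> complex)) set" where
  "uniform_roe X dX = op_closure X X {T. bounded_op X X T \<and>
     (\<exists>L. \<forall>x\<in>X. \<forall>x'\<in>X. dX x x' \<ge> L \<longrightarrow> T (delta x) x' = 0)}"

definition op_span :: "(('a \<Rightarrow> complex) \<Rightarrow> ('b \<Rightarrow> complex)) set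
    \<Rightarrow> (('a \<Rightarrow> complex) \<Rightarrow> ('b \<Rightarrow> complex)) set" where
  "op_span A = {T. \<exists>(n::nat) (c::nat \<Rightarrow> complex) B. (\<forall>i<n. B i \<in> A) \<and>
                    T = (\<lambda>v y. \<Sum>i<n. c i * B i v y)}"

definition hat_otimes ::
  "'a set \<Rightarrow> 'c set \<Rightarrow> (('a \<Rightarrow> complex) \<Rightarrow> ('b \<Rightarrow> complex)) set
    \<Rightarrow> (('b \<Rightarrow> complex) \<Rightarrow> ('c \<Rightarrow> complex)) set \<Rightarrow> (('a \<Rightarrow> complex) \<Rightarrow> ('c \<Rightarrow> complex)) set" where
  "hat_otimes X Z M N = op_closure X Z (op_span {(\<lambda>v. S (T v)) | S T. T \<in> M \<and> S \<in> N})"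

end

theory Submission
  imports Defs
begin


lemma zero_l2[simp]: "(\<lambda>_. 0) \<in> l2 X"
  by (simp add: l2_def)

lemma l2_out: "v \<in> l2 X \<Longrightarrow> x \<notin> X \<Longrightarrow> v x = 0"
  by (simp add: l2_def)

lemma l2_summ: "v \<in> l2 X \<Longrightarrow> (\<lambda>x. (cmod (v x))\<^sup>2) summable_on X"
  by (simp add: l2_def)

lemma l2norm_nonneg: "l2norm X v \<ge> 0"
  unfolding l2norm_def by (simp add: infsum_nonneg)

lemma fin_le_infsum:
  assumes "v \<in> l2 X" "finite F" "F \<subseteq> X"
  shows "(\<Sum>x\<in>F. (cmod (v x))\<^sup>2) \<le> (\<Sum>\<^sub>\<infinity>x\<in>X. (cmod (v x))\<^sup>2)"
proof -
  have "(\<Sum>x\<in>F. (cmod (v x))\<^sup>2) = (\<Sum>\<^sub>\<infinity>x\<in>F. (cmod (v x))\<^sup>2)"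
    using assms(2) by simp
  also have "\<dots> \<le> (\<Sum>\<^sub>\<infinity>x\<in>X. (cmod (v x))\<^sup>2)"
    by (rule infsum_mono_neutral) (use assms l2_summ in auto)
  finally show ?thesis .
qed

lemma L2_le_norm:
  assumes "v \<in> l2 X" "finite F" "F \<subseteq> X"
  shows "L2_set (\<lambda>x. cmod (v x)) F \<le> l2norm X v"
  unfolding L2_set_def l2norm_def using fin_le_infsum[OF assms] by simp

lemma L2_key:
  assumes "u \<in> l2 X" "v \<in> l2 X" "finite F" "F \<subseteq> X"
  shows "L2_set (\<lambda>x. cmod (a * u x + b * v x)) F \<le> cmod a * l2norm X u + cmod b * l2norm X v"
proof -
  have "L2_set (\<lambda>x. cmod (a * u x + b * v x)) F \<le> L2_set (\<lambda>x. cmod a * cmod (u x) + cmod b * cmod (v x)) F"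
    by (rule L2_set_mono) (auto intro: norm_triangle_le simp: norm_mult)
  also have "\<dots> \<le> L2_set (\<lambda>x. cmod a * cmod (u x)) F + L2_set (\<lambda>x. cmod b * cmod (v x)) F"
    by (rule L2_set_triangle_ineq)
  also have "\<dots> = cmod a * L2_set (\<lambda>x. cmod (u x)) F + cmod b * L2_set (\<lambda>x. cmod (v x)) F"
    by (simp add: L2_set_right_distrib)
  also have "\<dots> \<le> cmod a * l2norm X u + cmod b * l2norm X v"
    using L2_le_norm[OF assms(1,3,4)] L2_le_norm[OF assms(2,3,4)]
    by (intro add_mono mult_left_mono) auto
  finally show ?thesis .
qed

lemma l2_comb:
  assumes "u \<in> l2 X" "v \<in> l2 X"
  shows "(\<lambda>x. a * u x + b * v x) \<in> l2 X"
    and "l2norm X (\<lambda>x. a * u x + b * v x) \<le> cmod a * l2norm X u + cmod b * l2norm X v"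
proof -
  let ?B = "cmod a * l2norm X u + cmod b * l2norm X v"
  have B0: "?B \<ge> 0" by (simp add: l2norm_nonneg)
  have fin: "(\<Sum>x\<in>F. (cmod (a * u x + b * v x))\<^sup>2) \<le> ?B\<^sup>2" if "finite F" "F \<subseteq> X" for F
  proof -
    have h: "L2_set (\<lambda>x. cmod (a * u x + b * v x)) F \<le> ?B" using L2_key[OF assms that] .
    have "(L2_set (\<lambda>x. cmod (a * u x + b * v x)) F)\<^sup>2 \<le> ?B\<^sup>2"
      by (rule power_mono[OF h L2_set_nonneg])
    thus ?thesis by (simp add: L2_set_def sum_nonneg)
  qed
  have summ: "(\<lambda>x. (cmod (a * u x + b * v x))\<^sup>2) summable_on X"
    by (rule nonneg_bdd_above_summable_on) (auto intro!: bdd_aboveI[where M="?B\<^sup>2"] fin)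
  show "(\<lambda>x. a * u x + b * v x) \<in> l2 X"
    using assms summ by (auto simp: l2_def)
  have "(\<Sum>\<^sub>\<infinity>x\<in>X. (cmod (a * u x + b * v x))\<^sup>2) \<le> ?B\<^sup>2"
    by (rule infsum_le_finite_sums[OF summ fin])
  thus "l2norm X (\<lambda>x. a * u x + b * v x) \<le> ?B"
    unfolding l2norm_def[of X "\<lambda>x. a * u x + b * v x"] by (rule real_le_lsqrt[OF B0])
qed

lemma l2norm_zero_imp:
  assumes "v \<in> l2 X" "l2norm X v = 0"
  shows "v = (\<lambda>_. 0)"
proof
  fix x show "v x = 0"
  proof (cases "x \<in> X")
    case True
    have "sqrt (\<Sum>\<^sub>\<infinity>x\<in>X. (cmod (v x))\<^sup>2) = 0" using assms(2) unfolding l2norm_def .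
    hence "(\<Sum>\<^sub>\<infinity>x\<in>X. (cmod (v x))\<^sup>2) = 0" by (simp only: real_sqrt_eq_zero_cancel_iff)
    hence le: "(\<Sum>\<^sub>\<infinity>x\<in>X. (cmod (v x))\<^sup>2) \<le> 0" by simp
    have "(cmod (v x))\<^sup>2 = 0"
      using nonneg_infsum_le_0D[OF le l2_summ[OF assms(1)] _ True] by simp
    thus ?thesis by simp
  next
    case False show ?thesis using l2_out[OF assms(1) False] .
  qed
qed

lemma l2norm_zero[simp]: "l2norm X (\<lambda>_. 0) = 0"
  unfolding l2norm_def by simp



lemma bop_l2: "bounded_op X Y T \<Longrightarrow> v \<in> l2 X \<Longrightarrow> T v \<in> l2 Y"
  by (simp add: bounded_op_def)

lemma bop_out: "bounded_op X Y T \<Longrightarrow> v \<notin> l2 X \<Longrightarrow> T v = (\<lambda>_. 0)"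
  by (simp add: bounded_op_def)

lemma bop_lin: "bounded_op X Y T \<Longrightarrow> u \<in> l2 X \<Longrightarrow> v \<in> l2 X \<Longrightarrow>
   T (\<lambda>x. a * u x + b * v x) = (\<lambda>y. a * T u y + b * T v y)"
  unfolding bounded_op_def by blast

lemma bop_K: assumes "bounded_op X Y T"
  obtains K where "K \<ge> 0" "\<And>v. v \<in> l2 X \<Longrightarrow> l2norm Y (T v) \<le> K * l2norm X v"
proof -
  obtain K where K: "\<forall>v\<in>l2 X. l2norm Y (T v) \<le> K * l2norm X v"
    using assms unfolding bounded_op_def by blast
  show ?thesis
  proof (rule that[of "max K 0"])
    fix v assume v: "v \<in> l2 X"
    have "K * l2norm X v \<le> max K 0 * l2norm X v"
      by (rule mult_right_mono) (auto simp: l2norm_nonneg)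
    thus "l2norm Y (T v) \<le> max K 0 * l2norm X v" using K v by fastforce
  qed simp
qed

lemma bop_zero: assumes "bounded_op X Y T" shows "T (\<lambda>_. 0) = (\<lambda>_. 0)"
proof -
  have "T (\<lambda>x. 0 * (\<lambda>_. 0) x + 0 * (\<lambda>_. 0) x) = (\<lambda>y. 0 * T (\<lambda>_. 0) y + 0 * T (\<lambda>_. 0) y)"
    by (rule bop_lin[OF assms]) simp_all
  thus ?thesis by simp
qed

lemma bop_scale: assumes "bounded_op X Y T" "u \<in> l2 X"
  shows "T (\<lambda>x. c * u x) = (\<lambda>y. c * T u y)"
  using bop_lin[OF assms(1) assms(2) assms(2), of c 0] by simp

lemma bop_diff: assumes "bounded_op X Y T" "u \<in> l2 X" "v \<in> l2 X"
  shows "T (\<lambda>x. u x - v x) = (\<lambda>y. T u y - T v y)"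
  using bop_lin[OF assms, of 1 "-1"] by simp

lemma l2_scale: "u \<in> l2 X \<Longrightarrow> (\<lambda>x. c * u x) \<in> l2 X"
  using l2_comb(1)[of u X u c 0] by simp

lemma l2_diff: "u \<in> l2 X \<Longrightarrow> v \<in> l2 X \<Longrightarrow> (\<lambda>x. u x - v x) \<in> l2 X"
  using l2_comb(1)[of u X v 1 "-1"] by simp

lemma l2_add: "u \<in> l2 X \<Longrightarrow> v \<in> l2 X \<Longrightarrow> (\<lambda>x. u x + v x) \<in> l2 X"
  using l2_comb(1)[of u X v 1 1] by simp

lemma l2norm_scale: "u \<in> l2 X \<Longrightarrow> l2norm X (\<lambda>x. c * u x) \<le> cmod c * l2norm X u"
  using l2_comb(2)[of u X u c 0] by simp

lemma l2norm_diff: "u \<in> l2 X \<Longrightarrow> v \<in> l2 X \<Longrightarrow> l2norm X (\<lambda>x. u x - v x) \<le> l2norm X u + l2norm X v"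
  using l2_comb(2)[of u X v 1 "-1"] by simp

lemma l2norm_add: "u \<in> l2 X \<Longrightarrow> v \<in> l2 X \<Longrightarrow> l2norm X (\<lambda>x. u x + v x) \<le> l2norm X u + l2norm X v"
  using l2_comb(2)[of u X v 1 1] by simp

definition ball1 where "ball1 X = {v\<in>l2 X. l2norm X v \<le> 1}"

lemma ball1_ne: "(\<lambda>_. 0) \<in> ball1 X" by (simp add: ball1_def)

lemma opnorm_alt: "opnorm X Y T = (SUP v\<in>ball1 X. l2norm Y (T v))"
  by (simp add: opnorm_def ball1_def)

lemma opnorm_bdd: assumes "bounded_op X Y T"
  shows "bdd_above ((\<lambda>v. l2norm Y (T v)) ` ball1 X)"
proof -
  obtain K where K: "K \<ge> 0" "\<And>v. v \<in> l2 X \<Longrightarrow> l2norm Y (T v) \<le> K * l2norm X v"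
    using bop_K[OF assms] by blast
  have "l2norm Y (T v) \<le> K" if "v \<in> ball1 X" for v
  proof -
    have "l2norm Y (T v) \<le> K * l2norm X v" using K(2) that by (simp add: ball1_def)
    also have "\<dots> \<le> K * 1" using that K(1) by (intro mult_left_mono) (simp_all add: ball1_def)
    finally show ?thesis by simp
  qed
  thus ?thesis by (intro bdd_aboveI2)
qed

lemma opnorm_nonneg: assumes "bounded_op X Y T" shows "opnorm X Y T \<ge> 0"
proof -
  have "l2norm Y (T (\<lambda>_. 0)) \<le> opnorm X Y T"
    unfolding opnorm_alt by (rule cSUP_upper[OF ball1_ne opnorm_bdd[OF assms]])
  thus ?thesis by (simp add: bop_zero[OF assms])
qed

lemma opnorm_le: assumes "B \<ge> 0" "\<And>v. v \<in> l2 X \<Longrightarrow> l2norm Y (T v) \<le> B * l2norm X v"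
  shows "opnorm X Y T \<le> B"
  unfolding opnorm_alt
proof (rule cSUP_least)
  show "ball1 X \<noteq> {}" using ball1_ne by blast
  fix v assume "v \<in> ball1 X"
  hence "v \<in> l2 X" and "l2norm X v \<le> 1" by (auto simp: ball1_def)
  have "l2norm Y (T v) \<le> B * l2norm X v" using assms(2) \<open>v \<in> l2 X\<close> by blast
  also have "B * l2norm X v \<le> B * 1" by (rule mult_left_mono[OF \<open>l2norm X v \<le> 1\<close> assms(1)])
  finally show "l2norm Y (T v) \<le> B" by simp
qed

lemma opnorm_bound: assumes "bounded_op X Y T" "v \<in> l2 X"
  shows "l2norm Y (T v) \<le> opnorm X Y T * l2norm X v"
proof (cases "l2norm X v = 0")
  case True
  hence "v = (\<lambda>_. 0)" using l2norm_zero_imp[OF assms(2)] by simp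
  thus ?thesis using bop_zero[OF assms(1)] by simp
next
  case False
  define n where "n = l2norm X v"
  have n: "n > 0" using False l2norm_nonneg[of X v] unfolding n_def by linarith
  define w where "w = (\<lambda>x. complex_of_real (1/n) * v x)"
  have w: "w \<in> l2 X" unfolding w_def by (rule l2_scale[OF assms(2)])
  have "l2norm X w \<le> cmod (complex_of_real (1/n)) * n"
    unfolding w_def n_def by (rule l2norm_scale[OF assms(2)])
  also have "\<dots> = 1" using n by (simp add: norm_divide)
  finally have wb: "w \<in> ball1 X" using w by (simp add: ball1_def)
  have Tw: "l2norm Y (T w) \<le> opnorm X Y T"
    unfolding opnorm_alt by (rule cSUP_upper[OF wb opnorm_bdd[OF assms(1)]])
  have vw: "v = (\<lambda>x. complex_of_real n * w x)" using n unfolding w_def by auto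
  have "T v = (\<lambda>y. complex_of_real n * T w y)"
    unfolding vw by (rule bop_scale[OF assms(1) w])
  hence "l2norm Y (T v) \<le> cmod (complex_of_real n) * l2norm Y (T w)"
    using l2norm_scale[OF bop_l2[OF assms(1) w], of "complex_of_real n"] by simp
  also have "\<dots> \<le> n * opnorm X Y T" using n Tw by simp
  finally show ?thesis unfolding n_def by (simp add: mult.commute)
qed



lemma comb_bound:
  assumes T: "bounded_op X Y T" and S: "bounded_op X Y S" and v: "v \<in> l2 X"
  shows "l2norm Y (\<lambda>y. a * T v y + b * S v y) \<le> (cmod a * opnorm X Y T + cmod b * opnorm X Y S) * l2norm X v"
proof -
  have "l2norm Y (\<lambda>y. a * T v y + b * S v y) \<le> cmod a * l2norm Y (T v) + cmod b * l2norm Y (S v)"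
    by (rule l2_comb(2)[OF bop_l2[OF T v] bop_l2[OF S v]])
  also have "\<dots> \<le> cmod a * (opnorm X Y T * l2norm X v) + cmod b * (opnorm X Y S * l2norm X v)"
    by (intro add_mono mult_left_mono opnorm_bound T S v) auto
  finally show ?thesis by (simp add: algebra_simps)
qed

lemma bop_comb:
  assumes T: "bounded_op X Y T" and S: "bounded_op X Y S"
  shows "bounded_op X Y (\<lambda>v y. a * T v y + b * S v y)"
  unfolding bounded_op_def
proof (intro conjI ballI allI impI)
  fix v assume v: "v \<in> l2 X"
  show "(\<lambda>y. a * T v y + b * S v y) \<in> l2 Y" by (rule l2_comb(1)[OF bop_l2[OF T v] bop_l2[OF S v]])
next
  fix v assume "v \<notin> l2 X"
  thus "(\<lambda>y. a * T v y + b * S v y) = (\<lambda>_. 0)" using bop_out[OF T] bop_out[OF S] by simp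
next
  fix u v a' b' assume u: "u \<in> l2 X" and v: "v \<in> l2 X"
  show "(\<lambda>y. a * T (\<lambda>x. a' * u x + b' * v x) y + b * S (\<lambda>x. a' * u x + b' * v x) y) =
        (\<lambda>y. a' * (a * T u y + b * S u y) + b' * (a * T v y + b * S v y))"
    by (simp add: bop_lin[OF T u v] bop_lin[OF S u v] algebra_simps)
next
  show "\<exists>K. \<forall>v\<in>l2 X. l2norm Y (\<lambda>y. a * T v y + b * S v y) \<le> K * l2norm X v"
    using comb_bound[OF T S] by blast
qed

lemma opnorm_comb:
  assumes T: "bounded_op X Y T" and S: "bounded_op X Y S"
  shows "opnorm X Y (\<lambda>v y. a * T v y + b * S v y) \<le> cmod a * opnorm X Y T + cmod b * opnorm X Y S"
  by (rule opnorm_le) (auto intro!: comb_bound T S simp: opnorm_nonneg[OF T] opnorm_nonneg[OF S])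

lemma bop_diffop:
  assumes T: "bounded_op X Y T" and S: "bounded_op X Y S"
  shows "bounded_op X Y (\<lambda>v y. T v y - S v y)"
  using bop_comb[OF T S, of 1 "-1"] by simp

lemma opnorm_diffop:
  assumes T: "bounded_op X Y T" and S: "bounded_op X Y S"
  shows "opnorm X Y (\<lambda>v y. T v y - S v y) \<le> opnorm X Y T + opnorm X Y S"
  using opnorm_comb[OF T S, of 1 "-1"] by simp

lemma bop_compose:
  assumes T: "bounded_op X Y T" and S: "bounded_op Y Z S"
  shows "bounded_op X Z (\<lambda>v. S (T v))"
  unfolding bounded_op_def
proof (intro conjI ballI allI impI)
  fix v assume v: "v \<in> l2 X"
  show "S (T v) \<in> l2 Z" by (rule bop_l2[OF S bop_l2[OF T v]])
next
  fix v assume "v \<notin> l2 X"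
  thus "S (T v) = (\<lambda>_. 0)" using bop_out[OF T] bop_zero[OF S] by simp
next
  fix u v a b assume u: "u \<in> l2 X" and v: "v \<in> l2 X"
  show "S (T (\<lambda>x. a * u x + b * v x)) = (\<lambda>y. a * S (T u) y + b * S (T v) y)"
    by (simp add: bop_lin[OF T u v] bop_lin[OF S bop_l2[OF T u] bop_l2[OF T v]])
next
  have "l2norm Z (S (T v)) \<le> (opnorm Y Z S * opnorm X Y T) * l2norm X v" if v: "v \<in> l2 X" for v
  proof -
    have "l2norm Z (S (T v)) \<le> opnorm Y Z S * l2norm Y (T v)" by (rule opnorm_bound[OF S bop_l2[OF T v]])
    also have "\<dots> \<le> opnorm Y Z S * (opnorm X Y T * l2norm X v)"
      by (intro mult_left_mono opnorm_bound T v opnorm_nonneg S)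
    finally show ?thesis by (simp add: mult.assoc)
  qed
  thus "\<exists>K. \<forall>v\<in>l2 X. l2norm Z (S (T v)) \<le> K * l2norm X v" by blast
qed

lemma opnorm_compose:
  assumes T: "bounded_op X Y T" and S: "bounded_op Y Z S"
  shows "opnorm X Z (\<lambda>v. S (T v)) \<le> opnorm Y Z S * opnorm X Y T"
proof (rule opnorm_le)
  show "0 \<le> opnorm Y Z S * opnorm X Y T" using opnorm_nonneg[OF S] opnorm_nonneg[OF T] by simp
  fix v assume v: "v \<in> l2 X"
  have "l2norm Z (S (T v)) \<le> opnorm Y Z S * l2norm Y (T v)" by (rule opnorm_bound[OF S bop_l2[OF T v]])
  also have "\<dots> \<le> opnorm Y Z S * (opnorm X Y T * l2norm X v)"
    by (intro mult_left_mono opnorm_bound T v opnorm_nonneg S)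
  finally show "l2norm Z (S (T v)) \<le> opnorm Y Z S * opnorm X Y T * l2norm X v" by (simp add: mult.assoc)
qed

lemma bop_zeroop: "bounded_op X Y (\<lambda>v y. 0)"
  unfolding bounded_op_def by (auto intro!: exI[of _ 0])

lemma opnorm_zeroop[simp]: "opnorm X Y (\<lambda>v y. 0) = 0"
  unfolding opnorm_alt l2norm_zero by (rule cSUP_const) (use ball1_ne in blast)



definition good :: "'a set \<Rightarrow> 'b set \<Rightarrow> (('a \<Rightarrow> complex) \<Rightarrow> ('b \<Rightarrow> complex)) set \<Rightarrow> bool" where
  "good X Y A \<longleftrightarrow> (\<forall>T\<in>A. bounded_op X Y T) \<and> (\<lambda>v y. 0) \<in> A \<and>
     (\<forall>T\<in>A. \<forall>S\<in>A. \<forall>a b. (\<lambda>v y. a * T v y + b * S v y) \<in> A)"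

lemma clos_bounded: "T \<in> op_closure X Y A \<Longrightarrow> bounded_op X Y T"
  by (simp add: op_closure_def)

lemma clos_approx: "T \<in> op_closure X Y A \<Longrightarrow> e > 0 \<Longrightarrow> \<exists>S\<in>A. opnorm X Y (\<lambda>v y. T v y - S v y) < e"
  by (simp add: op_closure_def)

lemma clos_sub: assumes "\<forall>T\<in>A. bounded_op X Y T" shows "A \<subseteq> op_closure X Y A"
proof
  fix T assume T: "T \<in> A"
  have "(\<lambda>v y. T v y - T v y) = (\<lambda>v y. 0)" by simp
  hence "opnorm X Y (\<lambda>v y. T v y - T v y) = 0" by simp
  thus "T \<in> op_closure X Y A" using T assms unfolding op_closure_def by force
qed

lemma clos_mono: "A \<subseteq> B \<Longrightarrow> op_closure X Y A \<subseteq> op_closure X Y B"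
  unfolding op_closure_def by blast

lemma clos_tri:
  assumes T: "bounded_op X Y T" and S: "bounded_op X Y S" and R: "bounded_op X Y R"
  shows "opnorm X Y (\<lambda>v y. T v y - R v y) \<le> opnorm X Y (\<lambda>v y. T v y - S v y) + opnorm X Y (\<lambda>v y. S v y - R v y)"
proof -
  have eq: "(\<lambda>v y. T v y - R v y) = (\<lambda>v y. 1 * (\<lambda>v y. T v y - S v y) v y + 1 * (\<lambda>v y. S v y - R v y) v y)"
    by simp
  show ?thesis unfolding eq
    using opnorm_comb[OF bop_diffop[OF T S] bop_diffop[OF S R], of 1 1] by simp
qed

lemma clos_idem: assumes "\<forall>T\<in>A. bounded_op X Y T"
  shows "op_closure X Y (op_closure X Y A) \<subseteq> op_closure X Y A"
proof
  fix T assume T: "T \<in> op_closure X Y (op_closure X Y A)"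
  have Tb: "bounded_op X Y T" using T clos_bounded by blast
  have "\<exists>S'\<in>A. opnorm X Y (\<lambda>v y. T v y - S' v y) < e" if e: "e > 0" for e
  proof -
    have e2: "e/2 > 0" using e by simp
    obtain S where S: "S \<in> op_closure X Y A" "opnorm X Y (\<lambda>v y. T v y - S v y) < e/2"
      using clos_approx[OF T e2] by blast
    obtain S' where S': "S' \<in> A" "opnorm X Y (\<lambda>v y. S v y - S' v y) < e/2"
      using clos_approx[OF S(1) e2] by blast
    have S'b: "bounded_op X Y S'" using assms S'(1) by blast
    have "opnorm X Y (\<lambda>v y. T v y - S' v y) \<le> opnorm X Y (\<lambda>v y. T v y - S v y) + opnorm X Y (\<lambda>v y. S v y - S' v y)"
      by (rule clos_tri[OF Tb clos_bounded[OF S(1)] S'b])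
    also have "\<dots> < e" using S(2) S'(2) by simp
    finally have "opnorm X Y (\<lambda>v y. T v y - S' v y) < e" .
    thus ?thesis using S'(1) by blast
  qed
  thus "T \<in> op_closure X Y A" using Tb unfolding op_closure_def by blast
qed

lemma clos_comb:
  assumes g: "good X Y A" and T: "T \<in> op_closure X Y A" and S: "S \<in> op_closure X Y A"
  shows "(\<lambda>v y. a * T v y + b * S v y) \<in> op_closure X Y A"
proof -
  have Tb: "bounded_op X Y T" and Sb: "bounded_op X Y S" using T S clos_bounded by blast+
  have "\<exists>R\<in>A. opnorm X Y (\<lambda>v y. (a * T v y + b * S v y) - R v y) < e" if e: "e > 0" for e
  proof -
    define d where "d = e / (cmod a + cmod b + 1)"
    have d: "d > 0" using e unfolding d_def by (simp add: add_nonneg_pos)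
    obtain T' where T': "T' \<in> A" "opnorm X Y (\<lambda>v y. T v y - T' v y) < d"
      using T d unfolding op_closure_def by blast
    obtain S' where S': "S' \<in> A" "opnorm X Y (\<lambda>v y. S v y - S' v y) < d"
      using S d unfolding op_closure_def by blast
    have T'b: "bounded_op X Y T'" and S'b: "bounded_op X Y S'" using T'(1) S'(1) g by (auto simp: good_def)
    have R: "(\<lambda>v y. a * T' v y + b * S' v y) \<in> A" using g T'(1) S'(1) by (auto simp: good_def)
    have eq: "(\<lambda>v y. (a * T v y + b * S v y) - (a * T' v y + b * S' v y))
       = (\<lambda>v y. a * (\<lambda>v y. T v y - T' v y) v y + b * (\<lambda>v y. S v y - S' v y) v y)"
      by (simp add: algebra_simps)
    have "opnorm X Y (\<lambda>v y. (a * T v y + b * S v y) - (a * T' v y + b * S' v y))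
        \<le> cmod a * opnorm X Y (\<lambda>v y. T v y - T' v y) + cmod b * opnorm X Y (\<lambda>v y. S v y - S' v y)"
      unfolding eq by (rule opnorm_comb[OF bop_diffop[OF Tb T'b] bop_diffop[OF Sb S'b]])
    also have "\<dots> \<le> cmod a * d + cmod b * d"
      using T'(2) S'(2) by (intro add_mono mult_left_mono) auto
    also have "\<dots> < (cmod a + cmod b + 1) * d" using d by (simp add: algebra_simps)
    also have "\<dots> = e"
    proof -
      have pos: "cmod a + cmod b + 1 \<noteq> 0" by (smt (verit) norm_ge_zero)
      show ?thesis unfolding d_def using pos by simp
    qed
    finally show ?thesis using R by (intro bexI[where x="\<lambda>v y. a * T' v y + b * S' v y"]) auto
  qed
  thus ?thesis using bop_comb[OF Tb Sb] unfolding op_closure_def by blast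
qed

lemma clos_span:
  assumes g: "good X Y A"
  shows "op_span (op_closure X Y A) \<subseteq> op_closure X Y A"
proof
  have zero: "(\<lambda>v y. 0) \<in> op_closure X Y A"
    using g clos_sub[of A X Y] by (auto simp: good_def)
  have main: "\<forall>c B. (\<forall>i<n. B i \<in> op_closure X Y A) \<longrightarrow> (\<lambda>v y. \<Sum>i<n. c i * B i v y) \<in> op_closure X Y A" for n :: nat
  proof (induction n)
    case 0 thus ?case using zero by simp
  next
    case (Suc n)
    show ?case
    proof (intro allI impI)
      fix c B assume B: "\<forall>i<Suc n. B i \<in> op_closure X Y A"
      have "\<forall>i<n. B i \<in> op_closure X Y A" using B by simp
      hence IH: "(\<lambda>v y. \<Sum>i<n. c i * B i v y) \<in> op_closure X Y A" using Suc.IH by blast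
      have eq: "(\<lambda>v y. \<Sum>i<Suc n. c i * B i v y) = (\<lambda>v y. 1 * (\<lambda>v y. \<Sum>i<n. c i * B i v y) v y + c n * B n v y)"
        by simp
      show "(\<lambda>v y. \<Sum>i<Suc n. c i * B i v y) \<in> op_closure X Y A"
        unfolding eq by (rule clos_comb[OF g IH]) (use B in simp)
    qed
  qed
  fix T assume "T \<in> op_span (op_closure X Y A)"
  hence "\<exists>(n::nat) c B. (\<forall>i<n. B i \<in> op_closure X Y A) \<and> T = (\<lambda>v y. \<Sum>i<n. c i * B i v y)"
    unfolding op_span_def by simp
  then obtain n c B where "\<forall>i<n. B i \<in> op_closure X Y A" "T = (\<lambda>v y. \<Sum>i<(n::nat). c i * B i v y)"
    by blast
  thus "T \<in> op_closure X Y A" using main by blast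
qed

lemma span_mono: "A \<subseteq> B \<Longrightarrow> op_span A \<subseteq> op_span B"
  unfolding op_span_def by blast

lemma clos_compose:
  assumes A1: "\<forall>T\<in>A1. bounded_op X Y T" and A2: "\<forall>S\<in>A2. bounded_op Y Z S"
    and A3: "\<forall>T\<in>A1. \<forall>S\<in>A2. (\<lambda>v. S (T v)) \<in> A3"
    and T: "T \<in> op_closure X Y A1" and S: "S \<in> op_closure Y Z A2"
  shows "(\<lambda>v. S (T v)) \<in> op_closure X Z A3"
proof -
  have Tb: "bounded_op X Y T" and Sb: "bounded_op Y Z S" using T S clos_bounded by blast+
  define a where "a = opnorm Y Z S"
  define b where "b = opnorm X Y T"
  have a0: "a \<ge> 0" and b0: "b \<ge> 0" unfolding a_def b_def using opnorm_nonneg Tb Sb by blast+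
  have "\<exists>R\<in>A3. opnorm X Z (\<lambda>v y. S (T v) y - R v y) < e" if e: "e > 0" for e
  proof -
    define d where "d = min 1 (e / (a + b + 2))"
    have d: "d > 0" "d \<le> 1" "d \<le> e / (a + b + 2)" using e a0 b0 unfolding d_def by auto
    obtain T' where T': "T' \<in> A1" "opnorm X Y (\<lambda>v y. T v y - T' v y) < d"
      using T d unfolding op_closure_def by blast
    obtain S' where S': "S' \<in> A2" "opnorm Y Z (\<lambda>v y. S v y - S' v y) < d"
      using S d unfolding op_closure_def by blast
    have T'b: "bounded_op X Y T'" and S'b: "bounded_op Y Z S'" using T'(1) S'(1) A1 A2 by auto
    define DT where "DT = (\<lambda>v y. T v y - T' v y)"
    define DS where "DS = (\<lambda>v y. S v y - S' v y)"
    have DTb: "bounded_op X Y DT" unfolding DT_def by (rule bop_diffop[OF Tb T'b])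
    have DSb: "bounded_op Y Z DS" unfolding DS_def by (rule bop_diffop[OF Sb S'b])
    have nT': "opnorm X Y T' \<le> b + d"
    proof -
      have eq: "T' = (\<lambda>v y. 1 * T v y + (-1) * DT v y)" unfolding DT_def by simp
      have "opnorm X Y T' \<le> cmod 1 * opnorm X Y T + cmod (-1) * opnorm X Y DT"
        by (subst eq, rule opnorm_comb[OF Tb DTb])
      thus ?thesis using T'(2) unfolding b_def DT_def by simp
    qed
    have key: "l2norm Z (\<lambda>y. S (T v) y - S' (T' v) y) \<le> (a * d + d * (b + d)) * l2norm X v" if v: "v \<in> l2 X" for v
    proof -
      have Tv: "T v \<in> l2 Y" and T'v: "T' v \<in> l2 Y" using bop_l2 Tb T'b v by blast+
      have eq: "(\<lambda>y. S (T v) y - S' (T' v) y) = (\<lambda>y. 1 * S (DT v) y + 1 * DS (T' v) y)"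
        unfolding DT_def DS_def using bop_diff[OF Sb Tv T'v] by (auto simp: fun_eq_iff)
      have "l2norm Z (\<lambda>y. S (T v) y - S' (T' v) y) \<le> cmod 1 * l2norm Z (S (DT v)) + cmod 1 * l2norm Z (DS (T' v))"
        unfolding eq by (rule l2_comb(2)[OF bop_l2[OF Sb bop_l2[OF DTb v]] bop_l2[OF DSb T'v]])
      also have "\<dots> \<le> a * (d * l2norm X v) + d * ((b + d) * l2norm X v)"
      proof (intro add_mono)
        have "l2norm Z (S (DT v)) \<le> a * l2norm Y (DT v)"
          unfolding a_def by (rule opnorm_bound[OF Sb bop_l2[OF DTb v]])
        also have "\<dots> \<le> a * (opnorm X Y DT * l2norm X v)"
          by (intro mult_left_mono opnorm_bound DTb v a0)
        also have "\<dots> \<le> a * (d * l2norm X v)"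
          using T'(2) a0 l2norm_nonneg[of X v] unfolding DT_def
          by (intro mult_left_mono mult_right_mono) auto
        finally show "cmod 1 * l2norm Z (S (DT v)) \<le> a * (d * l2norm X v)" by simp
      next
        have "l2norm Z (DS (T' v)) \<le> opnorm Y Z DS * l2norm Y (T' v)"
          by (rule opnorm_bound[OF DSb T'v])
        also have "\<dots> \<le> d * ((b + d) * l2norm X v)"
        proof (rule mult_mono)
          show "opnorm Y Z DS \<le> d" using S'(2) unfolding DS_def by simp
          have "l2norm Y (T' v) \<le> opnorm X Y T' * l2norm X v" by (rule opnorm_bound[OF T'b v])
          also have "\<dots> \<le> (b + d) * l2norm X v"
            using nT' l2norm_nonneg[of X v] by (intro mult_right_mono) auto
          finally show "l2norm Y (T' v) \<le> (b + d) * l2norm X v" .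
        qed (use d l2norm_nonneg in auto)
        finally show "cmod 1 * l2norm Z (DS (T' v)) \<le> d * ((b + d) * l2norm X v)" by simp
      qed
      finally show ?thesis by (simp add: algebra_simps)
    qed
    have "opnorm X Z (\<lambda>v y. S (T v) y - S' (T' v) y) \<le> a * d + d * (b + d)"
    proof (rule opnorm_le)
      show "0 \<le> a * d + d * (b + d)" using a0 b0 d by simp
    next
      fix v assume "v \<in> l2 X"
      thus "l2norm Z (\<lambda>y. S (T v) y - S' (T' v) y) \<le> (a * d + d * (b + d)) * l2norm X v" by (rule key)
    qed
    also have "a * d + d * (b + d) \<le> d * (a + b + 1)"
      using d a0 b0 by (simp add: algebra_simps)
    also have "\<dots> < e"
    proof -
      have "d * (a + b + 1) < d * (a + b + 2)" using d by simp
      also have "\<dots> \<le> e" using d(3) a0 b0 by (simp add: field_simps)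
      finally show ?thesis .
    qed
    finally show ?thesis using A3 T'(1) S'(1) by (intro bexI[where x="\<lambda>v. S' (T' v)"]) auto
  qed
  thus ?thesis using bop_compose[OF Tb Sb] unfolding op_closure_def by blast
qed



lemma l2_sum: "finite F \<Longrightarrow> (\<forall>i\<in>F. u i \<in> l2 X) \<Longrightarrow> (\<lambda>x. \<Sum>i\<in>F. c i * u i x) \<in> l2 X"
proof (induction F rule: finite_induct)
  case empty thus ?case by simp
next
  case (insert i F)
  have eq: "(\<lambda>x. \<Sum>i\<in>insert i F. c i * u i x) = (\<lambda>x. c i * u i x + 1 * (\<lambda>x. \<Sum>i\<in>F. c i * u i x) x)"
    using insert(1,2) by simp
  show ?case unfolding eq by (rule l2_comb(1)) (use insert in simp_all)
qed

lemma bop_sum: assumes T: "bounded_op X Y T"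
  shows "finite F \<Longrightarrow> (\<forall>i\<in>F. u i \<in> l2 X) \<Longrightarrow> T (\<lambda>x. \<Sum>i\<in>F. c i * u i x) = (\<lambda>y. \<Sum>i\<in>F. c i * T (u i) y)"
proof (induction F rule: finite_induct)
  case empty thus ?case using bop_zero[OF T] by simp
next
  case (insert i F)
  have eq: "(\<lambda>x. \<Sum>i\<in>insert i F. c i * u i x) = (\<lambda>x. c i * u i x + 1 * (\<lambda>x. \<Sum>i\<in>F. c i * u i x) x)"
    using insert(1,2) by simp
  have "\<forall>i\<in>F. u i \<in> l2 X" using insert.prems by simp
  from l2_sum[OF insert.hyps(1) this] have l: "(\<lambda>x. \<Sum>i\<in>F. c i * u i x) \<in> l2 X" .
  have ui: "u i \<in> l2 X" using insert.prems by simp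
  have "T (\<lambda>x. c i * u i x + 1 * (\<lambda>x. \<Sum>i\<in>F. c i * u i x) x)
      = (\<lambda>y. c i * T (u i) y + 1 * T (\<lambda>x. \<Sum>i\<in>F. c i * u i x) y)"
    by (rule bop_lin[OF T ui l])
  also have "\<dots> = (\<lambda>y. \<Sum>i\<in>insert i F. c i * T (u i) y)"
    using insert.IH[OF \<open>\<forall>i\<in>F. u i \<in> l2 X\<close>] insert.hyps by simp
  finally show ?case unfolding eq .
qed

lemma delta_l2: assumes "x \<in> X" shows "delta x \<in> l2 X"
proof -
  have "(\<lambda>y. (cmod (delta x y))\<^sup>2) summable_on {x}" by simp
  hence "(\<lambda>y. (cmod (delta x y))\<^sup>2) summable_on X"
    by (rule summable_on_cong_neutral[THEN iffD1, rotated -1]) (use assms in \<open>auto simp: delta_def\<close>)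
  thus ?thesis using assms by (auto simp: l2_def delta_def)
qed

lemma mo_nonneg: "metric_on S d \<Longrightarrow> x \<in> S \<Longrightarrow> y \<in> S \<Longrightarrow> 0 \<le> d x y"
  by (simp add: metric_on_def)
lemma mo_refl: "metric_on S d \<Longrightarrow> x \<in> S \<Longrightarrow> d x x = 0"
  by (simp add: metric_on_def)
lemma mo_sym: "metric_on S d \<Longrightarrow> x \<in> S \<Longrightarrow> y \<in> S \<Longrightarrow> d x y = d y x"
  by (simp add: metric_on_def)
lemma mo_tri: "metric_on S d \<Longrightarrow> x \<in> S \<Longrightarrow> y \<in> S \<Longrightarrow> z \<in> S \<Longrightarrow> d x z \<le> d x y + d y z"
  unfolding metric_on_def by blast

lemma ai_C: "almost_isometry X dX Y dY C f \<Longrightarrow> C > 0"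
  by (simp add: almost_isometry_def)
lemma ai_img: "almost_isometry X dX Y dY C f \<Longrightarrow> x \<in> X \<Longrightarrow> f x \<in> Y"
  by (auto simp: almost_isometry_def)
lemma ai_lo: "almost_isometry X dX Y dY C f \<Longrightarrow> x \<in> X \<Longrightarrow> x' \<in> X \<Longrightarrow> dX x x' - C \<le> dY (f x) (f x')"
  by (simp add: almost_isometry_def)
lemma ai_hi: "almost_isometry X dX Y dY C f \<Longrightarrow> x \<in> X \<Longrightarrow> x' \<in> X \<Longrightarrow> dY (f x) (f x') \<le> dX x x' + C"
  by (simp add: almost_isometry_def)

lemma df_bdd:
  assumes mX: "metric_on X dX" and mY: "metric_on Y dY" and ai: "almost_isometry X dX Y dY C f"
    and x: "x \<in> X" and y: "y \<in> Y"
  shows "bdd_below ((\<lambda>x'. dX x x' + C / 2 + dY (f x') y) ` X)"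
proof (rule bdd_belowI2[where m=0])
  fix x' assume x': "x' \<in> X"
  show "0 \<le> dX x x' + C / 2 + dY (f x') y"
    using mo_nonneg[OF mX x x'] mo_nonneg[OF mY ai_img[OF ai x'] y] ai_C[OF ai] by simp
qed

lemma df_le:
  assumes mX: "metric_on X dX" and mY: "metric_on Y dY" and ai: "almost_isometry X dX Y dY C f"
    and x: "x \<in> X" and x': "x' \<in> X" and y: "y \<in> Y"
  shows "dist_f X dX dY C f (Inl x) (Inr y) \<le> dX x x' + C / 2 + dY (f x') y"
  unfolding dist_f.simps by (rule cINF_lower[OF df_bdd[OF mX mY ai x y] x'])

lemma df_ge_gen:
  assumes x: "x \<in> X" and h: "\<And>x'. x' \<in> X \<Longrightarrow> B \<le> dX x x' + C / 2 + dY (f x') y"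
  shows "B \<le> dist_f X dX dY C f (Inl x) (Inr y)"
  unfolding dist_f.simps by (rule cINF_greatest) (use x h in auto)

lemma df_nonneg:
  assumes mX: "metric_on X dX" and mY: "metric_on Y dY" and ai: "almost_isometry X dX Y dY C f"
    and x: "x \<in> X" and y: "y \<in> Y"
  shows "0 \<le> dist_f X dX dY C f (Inl x) (Inr y)"
  by (rule df_ge_gen[OF x]) (use mo_nonneg[OF mX x] mo_nonneg[OF mY _ y] ai_img[OF ai] ai_C[OF ai] in force)

lemma df_self:
  assumes mX: "metric_on X dX" and mY: "metric_on Y dY" and ai: "almost_isometry X dX Y dY C f"
    and x: "x \<in> X"
  shows "dist_f X dX dY C f (Inl x) (Inr (f x)) \<le> C / 2"
  using df_le[OF mX mY ai x x ai_img[OF ai x]] mo_refl[OF mX x] mo_refl[OF mY ai_img[OF ai x]] by simp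

lemma df_ge:
  assumes mX: "metric_on X dX" and mY: "metric_on Y dY" and ai: "almost_isometry X dX Y dY C f"
    and x: "x \<in> X" and y: "y \<in> Y"
  shows "dY (f x) y - C / 2 \<le> dist_f X dX dY C f (Inl x) (Inr y)"
proof (rule df_ge_gen[OF x])
  fix x' assume x': "x' \<in> X"
  have "dY (f x) y \<le> dY (f x) (f x') + dY (f x') y"
    by (rule mo_tri[OF mY ai_img[OF ai x] ai_img[OF ai x'] y])
  moreover have "dY (f x) (f x') \<le> dX x x' + C" by (rule ai_hi[OF ai x x'])
  ultimately show "dY (f x) y - C / 2 \<le> dX x x' + C / 2 + dY (f x') y" by simp
qed



lemma fp_transfer:
  assumes "\<And>x y. x \<in> X \<Longrightarrow> y \<in> Y \<Longrightarrow> d' (Inl x) (Inr y) \<le> d (Inl x) (Inr y) + c"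
    and "finite_propagation X Y d T"
  shows "finite_propagation X Y d' T"
proof -
  obtain L where L: "\<forall>x\<in>X. \<forall>y\<in>Y. d (Inl x) (Inr y) \<ge> L \<longrightarrow> T (delta x) y = 0"
    using assms(2) unfolding finite_propagation_def by blast
  have "\<forall>x\<in>X. \<forall>y\<in>Y. d' (Inl x) (Inr y) \<ge> L + c \<longrightarrow> T (delta x) y = 0"
  proof (intro ballI impI)
    fix x y assume xy: "x \<in> X" "y \<in> Y" and h: "d' (Inl x) (Inr y) \<ge> L + c"
    have "d (Inl x) (Inr y) \<ge> L" using assms(1)[OF xy] h by simp
    thus "T (delta x) y = 0" using L xy by blast
  qed
  thus ?thesis unfolding finite_propagation_def by blast
qed

locale setting =
  fixes X :: "'a set" and Y :: "'b set" and Z :: "'c set"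
    and dX :: "'a \<Rightarrow> 'a \<Rightarrow> real" and dY :: "'b \<Rightarrow> 'b \<Rightarrow> real" and dZ :: "'c \<Rightarrow> 'c \<Rightarrow> real"
    and f :: "'a \<Rightarrow> 'b" and g :: "'b \<Rightarrow> 'c" and Cf Cg Cgf :: real
  assumes mX: "metric_on X dX" and mY: "metric_on Y dY" and mZ: "metric_on Z dZ"
    and f: "almost_isometry X dX Y dY Cf f"
    and g: "almost_isometry Y dY Z dZ Cg g"
    and gf: "almost_isometry X dX Z dZ Cgf (g \<circ> f)"
begin

abbreviation "df \<equiv> dist_f X dX dY Cf f"
abbreviation "dg \<equiv> dist_f Y dY dZ Cg g"
abbreviation "dgf \<equiv> dist_f X dX dZ Cgf (g \<circ> f)"
abbreviation "mc \<equiv> metric_comp Y df dg"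

lemma Cpos: "Cf > 0" "Cg > 0" "Cgf > 0" using ai_C f g gf by blast+

lemma fX: "x \<in> X \<Longrightarrow> f x \<in> Y" using ai_img[OF f] .
lemma gY: "y \<in> Y \<Longrightarrow> g y \<in> Z" using ai_img[OF g] .

lemma mc_le: assumes x: "x \<in> X" and y: "y \<in> Y" and z: "z \<in> Z"
  shows "mc (Inl x) (Inr z) \<le> df (Inl x) (Inr y) + dg (Inl y) (Inr z)"
proof -
  have "bdd_below ((\<lambda>y. df (Inl x) (Inr y) + dg (Inl y) (Inr z)) ` Y)"
    by (rule bdd_belowI2[where m=0])
      (use df_nonneg[OF mX mY f x] df_nonneg[OF mY mZ g _ z] in force)
  thus ?thesis unfolding metric_comp.simps by (rule cINF_lower[OF _ y])
qed

lemma dg_le_dgf: assumes x: "x \<in> X" and z: "z \<in> Z"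
  shows "dg (Inl (f x)) (Inr z) \<le> dgf (Inl x) (Inr z) + (Cf + Cg / 2)"
proof -
  have "dg (Inl (f x)) (Inr z) - (Cf + Cg / 2) \<le> dgf (Inl x) (Inr z)"
  proof (rule df_ge_gen[OF x])
    fix x' assume x': "x' \<in> X"
    have "dg (Inl (f x)) (Inr z) \<le> dY (f x) (f x') + Cg / 2 + dZ (g (f x')) z"
      by (rule df_le[OF mY mZ g fX[OF x] fX[OF x'] z])
    moreover have "dY (f x) (f x') \<le> dX x x' + Cf" by (rule ai_hi[OF f x x'])
    ultimately show "dg (Inl (f x)) (Inr z) - (Cf + Cg / 2) \<le> dX x x' + Cgf / 2 + dZ ((g \<circ> f) x') z"
      using Cpos by simp
  qed
  thus ?thesis by simp
qed

lemma mc_le_dgf: assumes x: "x \<in> X" and z: "z \<in> Z"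
  shows "mc (Inl x) (Inr z) \<le> dgf (Inl x) (Inr z) + (Cf / 2 + Cf + Cg / 2)"
  using mc_le[OF x fX[OF x] z] df_self[OF mX mY f x] dg_le_dgf[OF x z] by simp

lemma dgf_le_mc: assumes x: "x \<in> X" and z: "z \<in> Z"
  shows "dgf (Inl x) (Inr z) \<le> mc (Inl x) (Inr z) + (Cgf / 2 + Cg / 2)"
proof -
  let ?c = "Cgf / 2 + Cg / 2"
  have "dgf (Inl x) (Inr z) - ?c \<le> mc (Inl x) (Inr z)"
    unfolding metric_comp.simps
  proof (rule cINF_greatest)
    show "Y \<noteq> {}" using fX[OF x] by blast
    fix y assume y: "y \<in> Y"
    have "dgf (Inl x) (Inr z) - ?c - df (Inl x) (Inr y) \<le> dg (Inl y) (Inr z)"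
    proof (rule df_ge_gen[OF y])
      fix y' assume y': "y' \<in> Y"
      have "dgf (Inl x) (Inr z) - ?c - (dY y y' + Cg / 2 + dZ (g y') z) \<le> df (Inl x) (Inr y)"
      proof (rule df_ge_gen[OF x])
        fix x' assume x': "x' \<in> X"
        have 1: "dgf (Inl x) (Inr z) \<le> dX x x' + Cgf / 2 + dZ ((g \<circ> f) x') z"
          by (rule df_le[OF mX mZ gf x x' z])
        have 2: "dZ (g (f x')) z \<le> dZ (g (f x')) (g y') + dZ (g y') z"
          by (rule mo_tri[OF mZ gY[OF fX[OF x']] gY[OF y'] z])
        have 3: "dZ (g (f x')) (g y') \<le> dY (f x') y' + Cg" by (rule ai_hi[OF g fX[OF x'] y'])
        have 4: "dY (f x') y' \<le> dY (f x') y + dY y y'" by (rule mo_tri[OF mY fX[OF x'] y y'])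
        show "dgf (Inl x) (Inr z) - ?c - (dY y y' + Cg / 2 + dZ (g y') z) \<le> dX x x' + Cf / 2 + dY (f x') y"
          using 1 2 3 4 Cpos by simp
      qed
      thus "dgf (Inl x) (Inr z) - ?c - df (Inl x) (Inr y) \<le> dY y y' + Cg / 2 + dZ (g y') z" by simp
    qed
    thus "dgf (Inl x) (Inr z) - ?c \<le> df (Inl x) (Inr y) + dg (Inl y) (Inr z)" by simp
  qed
  thus ?thesis by simp
qed

end



context setting begin

lemma comp_fp:
  assumes bgY: "bounded_geometry Y dY"
    and T: "bounded_op X Y T" and fpT: "finite_propagation X Y df T"
    and S: "bounded_op Y Z S" and fpS: "finite_propagation Y Z dg S"
  shows "finite_propagation X Z mc (\<lambda>v. S (T v))"
proof -
  obtain L1 where L1: "\<forall>x\<in>X. \<forall>y\<in>Y. df (Inl x) (Inr y) \<ge> L1 \<longrightarrow> T (delta x) y = 0"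
    using fpT unfolding finite_propagation_def by blast
  obtain L2 where L2: "\<forall>y\<in>Y. \<forall>z\<in>Z. dg (Inl y) (Inr z) \<ge> L2 \<longrightarrow> S (delta y) z = 0"
    using fpS unfolding finite_propagation_def by blast
  have "\<forall>x\<in>X. \<forall>z\<in>Z. mc (Inl x) (Inr z) \<ge> L1 + L2 \<longrightarrow> S (T (delta x)) z = 0"
  proof (intro ballI impI)
    fix x z assume x: "x \<in> X" and z: "z \<in> Z" and big: "mc (Inl x) (Inr z) \<ge> L1 + L2"
    define R where "R = max L1 0 + Cf / 2 + 1"
    have R: "R > 0" unfolding R_def using Cpos by simp
    define F where "F = {y\<in>Y. dY (f x) y \<le> R}"
    have finF: "finite F" unfolding F_def using bgY R fX[OF x] unfolding bounded_geometry_def by blast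
    have FY: "F \<subseteq> Y" unfolding F_def by blast
    define c where "c = T (delta x)"
    have cl2: "c \<in> l2 Y" unfolding c_def by (rule bop_l2[OF T delta_l2[OF x]])
    have out: "c y = 0" if "y \<notin> F" for y
    proof (cases "y \<in> Y")
      case False thus ?thesis using l2_out[OF cl2] by simp
    next
      case True
      hence "dY (f x) y > R" using that unfolding F_def by simp
      hence "df (Inl x) (Inr y) \<ge> L1" using df_ge[OF mX mY f x True] unfolding R_def by simp
      thus ?thesis using L1 x True unfolding c_def by blast
    qed
    have ceq: "c = (\<lambda>y. \<Sum>y'\<in>F. c y' * delta y' y)"
    proof
      fix y
      have "(\<Sum>y'\<in>F. c y' * delta y' y) = (\<Sum>y'\<in>F. if y = y' then c y' else 0)"
        by (rule sum.cong) (auto simp: delta_def)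
      also have "\<dots> = (if y \<in> F then c y else 0)" using finF by (simp add: sum.delta)
      also have "\<dots> = c y" using out by auto
      finally show "c y = (\<Sum>y'\<in>F. c y' * delta y' y)" by simp
    qed
    have dl: "\<forall>i\<in>F. delta i \<in> l2 Y" using FY by (auto intro: delta_l2)
    have "S c = S (\<lambda>y. \<Sum>y'\<in>F. c y' * delta y' y)" by (rule arg_cong[where f=S, OF ceq])
    also have "\<dots> = (\<lambda>z. \<Sum>y'\<in>F. c y' * S (delta y') z)"
      by (rule bop_sum[OF S finF dl])
    finally have "S c = (\<lambda>z. \<Sum>y'\<in>F. c y' * S (delta y') z)" .
    hence "S c z = (\<Sum>y'\<in>F. c y' * S (delta y') z)" by simp
    also have "\<dots> = 0"
    proof (rule sum.neutral, rule ballI)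
      fix y assume yF: "y \<in> F"
      hence y: "y \<in> Y" using FY by blast
      show "c y * S (delta y) z = 0"
      proof (cases "c y = 0")
        case False
        hence "df (Inl x) (Inr y) < L1" using L1 x y unfolding c_def by force
        hence "dg (Inl y) (Inr z) \<ge> L2" using mc_le[OF x y z] big by simp
        thus ?thesis using L2 y z by simp
      qed simp
    qed
    finally show "S (T (delta x)) z = 0" unfolding c_def .
  qed
  thus ?thesis unfolding finite_propagation_def by blast
qed

end



definition pull :: "'b set \<Rightarrow> 'a set \<Rightarrow> ('a \<Rightarrow> 'b) \<Rightarrow> (('b \<Rightarrow> complex) \<Rightarrow> ('a \<Rightarrow> complex))" where
  "pull Yd A h = (\<lambda>w. if w \<in> l2 Yd then (\<lambda>x. if x \<in> A then w (h x) else 0) else (\<lambda>_. 0))"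

lemma pull_l2:
  assumes AX: "A \<subseteq> X'" and inj: "inj_on h A" and hA: "h ` A \<subseteq> Yd" and w: "w \<in> l2 Yd"
  shows "(\<lambda>x. if x \<in> A then w (h x) else 0) \<in> l2 X'"
    and "l2norm X' (\<lambda>x. if x \<in> A then w (h x) else 0) \<le> l2norm Yd w"
proof -
  let ?q = "\<lambda>x. (cmod (if x \<in> A then w (h x) else 0))\<^sup>2"
  let ?p = "\<lambda>y. (cmod (w y))\<^sup>2"
  have s1: "?p summable_on (h ` A)" by (rule summable_on_subset_banach[OF l2_summ[OF w] hA])
  hence s2: "(?p \<circ> h) summable_on A" using summable_on_reindex[OF inj] by blast
  have s3: "?q summable_on X'"
    by (rule summable_on_cong_neutral[THEN iffD1, OF _ _ _ s2]) (use AX in auto)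
  show "(\<lambda>x. if x \<in> A then w (h x) else 0) \<in> l2 X'"
    using s3 AX unfolding l2_def by auto
  have "infsum ?q X' = infsum (?p \<circ> h) A"
    by (rule infsum_cong_neutral) (use AX in auto)
  also have "\<dots> = infsum ?p (h ` A)" by (rule infsum_reindex[OF inj, symmetric])
  also have "\<dots> \<le> infsum ?p Yd"
    by (rule infsum_mono_neutral[OF s1 l2_summ[OF w]]) (use hA in auto)
  finally show "l2norm X' (\<lambda>x. if x \<in> A then w (h x) else 0) \<le> l2norm Yd w"
    unfolding l2norm_def by simp
qed

lemma pull_bop:
  assumes AX: "A \<subseteq> X'" and inj: "inj_on h A" and hA: "h ` A \<subseteq> Yd"
  shows "bounded_op Yd X' (pull Yd A h)"
  unfolding bounded_op_def
proof (intro conjI ballI allI impI)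
  fix w assume w: "w \<in> l2 Yd"
  show "pull Yd A h w \<in> l2 X'" unfolding pull_def using pull_l2(1)[OF AX inj hA w] w by simp
next
  fix w assume "w \<notin> l2 Yd"
  thus "pull Yd A h w = (\<lambda>_. 0)" unfolding pull_def by simp
next
  fix u v a b assume u: "u \<in> l2 Yd" and v: "v \<in> l2 Yd"
  have c: "(\<lambda>x. a * u x + b * v x) \<in> l2 Yd" by (rule l2_comb(1)[OF u v])
  show "pull Yd A h (\<lambda>x. a * u x + b * v x) = (\<lambda>y. a * pull Yd A h u y + b * pull Yd A h v y)"
    unfolding pull_def using u v c by (auto simp: fun_eq_iff)
next
  have "l2norm X' (pull Yd A h w) \<le> 1 * l2norm Yd w" if w: "w \<in> l2 Yd" for w
    unfolding pull_def using pull_l2(2)[OF AX inj hA w] w by simp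
  thus "\<exists>K. \<forall>v\<in>l2 Yd. l2norm X' (pull Yd A h v) \<le> K * l2norm Yd v" by blast
qed

lemma pull_zero: "pull Yd A h (\<lambda>_. 0) = (\<lambda>_. 0)"
  unfolding pull_def by (auto simp: fun_eq_iff)



context setting begin

definition idx :: "'a \<Rightarrow> nat" where
  "idx x = card {x'\<in>X. f x' = f x \<and> to_nat_on X x' < to_nat_on X x}"

definition Xi :: "nat \<Rightarrow> 'a set" where "Xi i = {x\<in>X. idx x = i}"

lemma fib_sub: assumes x: "x \<in> X" shows "{x'\<in>X. f x' = f x} \<subseteq> {x'\<in>X. dX x x' \<le> Cf}"
proof
  fix x' assume "x' \<in> {x'\<in>X. f x' = f x}"
  hence x': "x' \<in> X" "f x' = f x" by auto
  have "dX x x' - Cf \<le> dY (f x) (f x')" by (rule ai_lo[OF f x x'(1)])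
  also have "\<dots> = 0" using x'(2) mo_refl[OF mY fX[OF x]] by simp
  finally show "x' \<in> {x'\<in>X. dX x x' \<le> Cf}" using x' by simp
qed

lemma idx_props:
  assumes bgX: "bounded_geometry X dX"
  obtains N where "\<And>x. x \<in> X \<Longrightarrow> idx x < N"
proof -
  obtain N where N: "\<forall>x\<in>X. finite {y\<in>X. dX x y \<le> Cf} \<and> card {y\<in>X. dX x y \<le> Cf} \<le> N"
    using bgX Cpos unfolding bounded_geometry_def by blast
  have "idx x < N" if x: "x \<in> X" for x
  proof -
    let ?F = "{x'\<in>X. f x' = f x}"
    let ?S = "{x'\<in>X. f x' = f x \<and> to_nat_on X x' < to_nat_on X x}"
    have finF: "finite ?F" using N x fib_sub[OF x] finite_subset by blast
    have cF: "card ?F \<le> N" using N x fib_sub[OF x] card_mono le_trans by (metis (no_types, lifting))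
    have "?S \<subset> ?F" using x by auto
    hence "card ?S < card ?F" using finF psubset_card_mono by blast
    thus ?thesis using cF unfolding idx_def by simp
  qed
  thus ?thesis using that by blast
qed

lemma idx_inj_aux:
  assumes bgX: "bounded_geometry X dX" and x1: "x1 \<in> X" and x2: "x2 \<in> X" and fe: "f x1 = f x2"
    and lt: "to_nat_on X x1 < to_nat_on X x2"
  shows "idx x1 < idx x2"
proof -
  obtain N where N: "\<forall>x\<in>X. finite {y\<in>X. dX x y \<le> Cf} \<and> card {y\<in>X. dX x y \<le> Cf} \<le> N"
    using bgX Cpos unfolding bounded_geometry_def by blast
  let ?S1 = "{x'\<in>X. f x' = f x1 \<and> to_nat_on X x' < to_nat_on X x1}"
  let ?S2 = "{x'\<in>X. f x' = f x2 \<and> to_nat_on X x' < to_nat_on X x2}"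
  have s2: "?S2 \<subseteq> {x'\<in>X. f x' = f x2}" by blast
  have "finite {y\<in>X. dX x2 y \<le> Cf}" using N x2 by blast
  hence "finite {x'\<in>X. f x' = f x2}" by (rule finite_subset[OF fib_sub[OF x2]])
  hence fin2: "finite ?S2" by (rule finite_subset[OF s2])
  have sub: "?S1 \<subseteq> ?S2" using fe lt by auto
  have "x1 \<in> ?S2" "x1 \<notin> ?S1" using x1 lt fe by auto
  hence "?S1 \<subset> ?S2" using sub by blast
  hence "card ?S1 < card ?S2" using fin2 psubset_card_mono by blast
  thus ?thesis unfolding idx_def .
qed

lemma idx_inj:
  assumes bgX: "bounded_geometry X dX" and cX: "countable X"
    and x1: "x1 \<in> X" and x2: "x2 \<in> X" and fe: "f x1 = f x2" and ie: "idx x1 = idx x2"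
  shows "x1 = x2"
proof -
  have "\<not> to_nat_on X x1 < to_nat_on X x2" using idx_inj_aux[OF bgX x1 x2 fe] ie by auto
  moreover have "\<not> to_nat_on X x2 < to_nat_on X x1" using idx_inj_aux[OF bgX x2 x1 fe[symmetric]] ie by auto
  ultimately have "to_nat_on X x1 = to_nat_on X x2" by simp
  thus ?thesis by (rule inj_onD[OF inj_on_to_nat_on[OF cX] _ x1 x2])
qed

lemma Xi_sub: "Xi i \<subseteq> X" unfolding Xi_def by blast

lemma inj_Xi: assumes bgX: "bounded_geometry X dX" and cX: "countable X" shows "inj_on f (Xi i)"
  unfolding inj_on_def Xi_def using idx_inj[OF bgX cX] by auto

lemma fXi: "f ` Xi i \<subseteq> Y" using fX Xi_sub by blast

end



context setting begin

lemma decomp: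
  assumes bgX: "bounded_geometry X dX" and cX: "countable X"
    and P: "bounded_op X Z P" and fpP: "finite_propagation X Z dgf P"
  shows "P \<in> op_span {(\<lambda>v. S (T v)) | S T. T \<in> {T. bounded_op X Y T \<and> finite_propagation X Y df T}
                                          \<and> S \<in> {S. bounded_op Y Z S \<and> finite_propagation Y Z dg S}}"
proof -
  obtain N where N: "\<And>x. x \<in> X \<Longrightarrow> idx x < N" using idx_props[OF bgX] by blast
  define V where "V i = pull X (f ` Xi i) (inv_into (Xi i) f)" for i
  define W where "W i = pull Y (Xi i) f" for i
  define S where "S i = (\<lambda>w. P (W i w))" for i
  have inj: "inj_on f (Xi i)" for i by (rule inj_Xi[OF bgX cX])
  have Vb: "bounded_op X Y (V i)" for i
    unfolding V_def
  proof (rule pull_bop[OF fXi inj_on_inv_into[OF subset_refl]])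
    show "inv_into (Xi i) f ` f ` Xi i \<subseteq> X" using inj[of i] Xi_sub by auto
  qed
  have Wb: "bounded_op Y X (W i)" for i unfolding W_def by (rule pull_bop[OF Xi_sub inj fXi])
  have Sb: "bounded_op Y Z (S i)" for i unfolding S_def by (rule bop_compose[OF Wb P])
  have Vfp: "finite_propagation X Y df (V i)" for i
  proof -
    have "\<forall>x\<in>X. \<forall>y\<in>Y. df (Inl x) (Inr y) \<ge> Cf \<longrightarrow> V i (delta x) y = 0"
    proof (intro ballI impI)
      fix x y assume x: "x \<in> X" and y: "y \<in> Y" and big: "df (Inl x) (Inr y) \<ge> Cf"
      show "V i (delta x) y = 0"
      proof (rule ccontr)
        assume ne: "V i (delta x) y \<noteq> 0"
        hence yin: "y \<in> f ` Xi i" and dv: "delta x (inv_into (Xi i) f y) \<noteq> 0"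
          using delta_l2[OF x] unfolding V_def pull_def by (auto split: if_splits)
        have "inv_into (Xi i) f y = x" using dv by (simp add: delta_def split: if_splits)
        hence "y = f x" using f_inv_into_f[OF yin] by simp
        hence "df (Inl x) (Inr y) \<le> Cf / 2" using df_self[OF mX mY f x] by simp
        thus False using big Cpos by simp
      qed
    qed
    thus ?thesis unfolding finite_propagation_def by blast
  qed
  have Sfp: "finite_propagation Y Z dg (S i)" for i
  proof -
    obtain LP where LP: "\<forall>x\<in>X. \<forall>z\<in>Z. dgf (Inl x) (Inr z) \<ge> LP \<longrightarrow> P (delta x) z = 0"
      using fpP unfolding finite_propagation_def by blast
    have "\<forall>y\<in>Y. \<forall>z\<in>Z. dg (Inl y) (Inr z) \<ge> LP + (Cf + Cg / 2) \<longrightarrow> S i (delta y) z = 0"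
    proof (intro ballI impI)
      fix y z assume y: "y \<in> Y" and z: "z \<in> Z" and big: "dg (Inl y) (Inr z) \<ge> LP + (Cf + Cg / 2)"
      have Wd: "W i (delta y) = (\<lambda>x. if x \<in> Xi i then delta y (f x) else 0)"
        unfolding W_def pull_def using delta_l2[OF y] by simp
      show "S i (delta y) z = 0"
      proof (cases "\<exists>x\<in>Xi i. f x = y")
        case True
        then obtain x where x: "x \<in> Xi i" "f x = y" by blast
        have xX: "x \<in> X" using x Xi_sub by blast
        have "W i (delta y) = delta x"
        proof
          fix x'
          show "W i (delta y) x' = delta x x'"
          proof (cases "x' \<in> Xi i")
            case True
            have "f x' = y \<longleftrightarrow> x' = x" using inj_onD[OF inj _ True x(1)] x(2) by auto
            thus ?thesis unfolding Wd using True by (simp add: delta_def)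
          next
            case False
            hence "x' \<noteq> x" using x by blast
            thus ?thesis unfolding Wd using False by (simp add: delta_def)
          qed
        qed
        moreover have "dgf (Inl x) (Inr z) \<ge> LP" using dg_le_dgf[OF xX z] big x(2) by simp
        ultimately show ?thesis unfolding S_def using LP xX z by simp
      next
        case False
        hence "W i (delta y) = (\<lambda>_. 0)" unfolding Wd by (auto simp: fun_eq_iff delta_def)
        thus ?thesis unfolding S_def using bop_zero[OF P] by simp
      qed
    qed
    thus ?thesis unfolding finite_propagation_def by blast
  qed
  have WV: "W i (V i v) = (\<lambda>x. if x \<in> Xi i then v x else 0)" if v: "v \<in> l2 X" for i v
  proof -
    have "V i v \<in> l2 Y" by (rule bop_l2[OF Vb v])
    hence "W i (V i v) = (\<lambda>x. if x \<in> Xi i then V i v (f x) else 0)" unfolding W_def pull_def by simp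
    also have "\<dots> = (\<lambda>x. if x \<in> Xi i then v x else 0)"
      unfolding V_def pull_def using v inj[of i] by (auto simp: fun_eq_iff)
    finally show ?thesis .
  qed
  have Peq: "P = (\<lambda>v y. \<Sum>i<N. 1 * (\<lambda>v. S i (V i v)) v y)"
  proof (intro ext)
    fix v y
    show "P v y = (\<Sum>i<N. 1 * (\<lambda>v. S i (V i v)) v y)"
    proof (cases "v \<in> l2 X")
      case False
      have "V i v = (\<lambda>_. 0)" for i using bop_out[OF Vb False] .
      hence "S i (V i v) = (\<lambda>_. 0)" for i unfolding S_def using bop_zero[OF Wb] bop_zero[OF P] by simp
      thus ?thesis using bop_out[OF P False] by simp
    next
      case True
      have l: "\<forall>i\<in>{..<N}. W i (V i v) \<in> l2 X" using bop_l2[OF Wb bop_l2[OF Vb True]] by blast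
      have sv: "(\<lambda>x. \<Sum>i\<in>{..<N}. 1 * W i (V i v) x) = v"
      proof
        fix x
        show "(\<Sum>i\<in>{..<N}. 1 * W i (V i v) x) = v x"
        proof (cases "x \<in> X")
          case True
          have "(\<Sum>i\<in>{..<N}. 1 * W i (V i v) x) = (\<Sum>i\<in>{..<N}. if idx x = i then v x else 0)"
            by (rule sum.cong) (use True \<open>v \<in> l2 X\<close> in \<open>auto simp: WV Xi_def\<close>)
          also have "\<dots> = v x" using N[OF True] by simp
          finally show ?thesis .
        next
          case False
          have vx: "v x = 0" using l2_out[OF \<open>v \<in> l2 X\<close> False] .
          have nx: "x \<notin> Xi i" for i using False Xi_sub by blast
          show ?thesis using \<open>v \<in> l2 X\<close> by (simp add: WV vx nx)
        qed
      qed
      have "P v = P (\<lambda>x. \<Sum>i\<in>{..<N}. 1 * W i (V i v) x)" using sv by simp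
      also have "\<dots> = (\<lambda>y. \<Sum>i\<in>{..<N}. 1 * P (W i (V i v)) y)" by (rule bop_sum[OF P finite_lessThan l])
      finally show ?thesis unfolding S_def by simp
    qed
  qed
  show ?thesis unfolding op_span_def
  proof (rule CollectI, rule exI[of _ N], rule exI[of _ "\<lambda>i. (1::complex)"], rule exI[of _ "\<lambda>i v. S i (V i v)"], rule conjI, intro allI impI)
    fix i assume "i < N"
    show "(\<lambda>v. S i (V i v)) \<in> {(\<lambda>v. S (T v)) | S T. T \<in> {T. bounded_op X Y T \<and> finite_propagation X Y df T}
                                          \<and> S \<in> {S. bounded_op Y Z S \<and> finite_propagation Y Z dg S}}"
      using Vb Vfp Sb Sfp by blast
  next
    show "P = (\<lambda>v y. \<Sum>i<N. 1 * (\<lambda>i v. S i (V i v)) i v y)" using Peq by simp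
  qed
qed

end



lemma fp_zero: "finite_propagation X Y d (\<lambda>v y. 0)"
  unfolding finite_propagation_def by simp

lemma fp_comb:
  assumes "finite_propagation X Y d T" "finite_propagation X Y d S"
  shows "finite_propagation X Y d (\<lambda>v y. a * T v y + b * S v y)"
proof -
  obtain L1 where L1: "\<forall>x\<in>X. \<forall>y\<in>Y. d (Inl x) (Inr y) \<ge> L1 \<longrightarrow> T (delta x) y = 0"
    using assms(1) unfolding finite_propagation_def by blast
  obtain L2 where L2: "\<forall>x\<in>X. \<forall>y\<in>Y. d (Inl x) (Inr y) \<ge> L2 \<longrightarrow> S (delta x) y = 0"
    using assms(2) unfolding finite_propagation_def by blast
  have "\<forall>x\<in>X. \<forall>y\<in>Y. d (Inl x) (Inr y) \<ge> max L1 L2 \<longrightarrow> a * T (delta x) y + b * S (delta x) y = 0"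
    using L1 L2 by auto
  thus ?thesis unfolding finite_propagation_def by blast
qed

lemma good_P: "good X Y {T. bounded_op X Y T \<and> finite_propagation X Y d T}"
  unfolding good_def using bop_zeroop fp_zero bop_comb fp_comb by blast

lemma P_eq:
  assumes "\<And>x y. x \<in> X \<Longrightarrow> y \<in> Y \<Longrightarrow> d' (Inl x) (Inr y) \<le> d (Inl x) (Inr y) + c"
    and "\<And>x y. x \<in> X \<Longrightarrow> y \<in> Y \<Longrightarrow> d (Inl x) (Inr y) \<le> d' (Inl x) (Inr y) + c'"
  shows "{T. bounded_op X Y T \<and> finite_propagation X Y d T} = {T. bounded_op X Y T \<and> finite_propagation X Y d' T}"
  using fp_transfer[of X Y d' d c] fp_transfer[of X Y d d' c'] assms by blast

lemma cdm_metric: "countable_discrete_metric S d \<Longrightarrow> metric_on S d"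
  by (simp add: countable_discrete_metric_def)
lemma cdm_count: "countable_discrete_metric S d \<Longrightarrow> countable S"
  by (simp add: countable_discrete_metric_def)

theorem theorem3p3:
  fixes X :: "'a set" and Y :: "'b set" and Z :: "'c set"
    and dX :: "'a \<Rightarrow> 'a \<Rightarrow> real" and dY :: "'b \<Rightarrow> 'b \<Rightarrow> real" and dZ :: "'c \<Rightarrow> 'c \<Rightarrow> real"
    and f :: "'a \<Rightarrow> 'b" and g :: "'b \<Rightarrow> 'c"
    and Cf Cg Cgf Cid :: real
  assumes X: "countable_discrete_metric X dX" "bounded_geometry X dX"
    and Y: "countable_discrete_metric Y dY" "bounded_geometry Y dY"
    and Z: "countable_discrete_metric Z dZ" "bounded_geometry Z dZ"
    and f: "almost_isometry X dX Y dY Cf f"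
    and g: "almost_isometry Y dY Z dZ Cg g"
    and gf: "almost_isometry X dX Z dZ Cgf (g \<circ> f)"
    and id: "almost_isometry X dX X dX Cid id"
  shows "M_d X Z (dist_f X dX dZ Cgf (g \<circ> f))
           = hat_otimes X Z (M_d X Y (dist_f X dX dY Cf f)) (M_d Y Z (dist_f Y dY dZ Cg g))
       \<and> hat_otimes X Z (M_d X Y (dist_f X dX dY Cf f)) (M_d Y Z (dist_f Y dY dZ Cg g))
           = M_d X Z (metric_comp Y (dist_f X dX dY Cf f) (dist_f Y dY dZ Cg g))
       \<and> M_d X X (dist_f X dX dX Cid id) = uniform_roe X dX"
proof -
  have mX: "metric_on X dX" and mY: "metric_on Y dY" and mZ: "metric_on Z dZ"
    using X Y Z cdm_metric by blast+
  have cX: "countable X" using X cdm_count by blast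
  interpret setting X Y Z dX dY dZ f g Cf Cg Cgf
    by (rule setting.intro[OF mX mY mZ f g gf])
  define Pf where "Pf = {T. bounded_op X Y T \<and> finite_propagation X Y df T}"
  define Pg where "Pg = {T. bounded_op Y Z T \<and> finite_propagation Y Z dg T}"
  define Pgf where "Pgf = {T. bounded_op X Z T \<and> finite_propagation X Z dgf T}"
  define Pmc where "Pmc = {T. bounded_op X Z T \<and> finite_propagation X Z mc T}"
  have Pmc: "Pmc = Pgf" unfolding Pmc_def Pgf_def
    by (rule P_eq[where d=mc and d'=dgf, OF dgf_le_mc mc_le_dgf])
  have gPgf: "good X Z Pgf" unfolding Pgf_def by (rule good_P)
  have bPf: "\<forall>T\<in>Pf. bounded_op X Y T" and bPg: "\<forall>T\<in>Pg. bounded_op Y Z T"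
    and bPgf: "\<forall>T\<in>Pgf. bounded_op X Z T"
    unfolding Pf_def Pg_def Pgf_def by blast+
  have comps: "\<forall>T\<in>Pf. \<forall>S\<in>Pg. (\<lambda>v. S (T v)) \<in> Pgf"
  proof (intro ballI)
    fix T S assume T: "T \<in> Pf" and S: "S \<in> Pg"
    have "(\<lambda>v. S (T v)) \<in> Pmc" unfolding Pmc_def
      using bop_compose comp_fp[OF Y(2)] T S unfolding Pf_def Pg_def by blast
    thus "(\<lambda>v. S (T v)) \<in> Pgf" using Pmc by simp
  qed
  define CM where "CM = {(\<lambda>v. S (T v)) | S T. T \<in> op_closure X Y Pf \<and> S \<in> op_closure Y Z Pg}"
  have H: "hat_otimes X Z (M_d X Y df) (M_d Y Z dg) = op_closure X Z (op_span CM)"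
    unfolding hat_otimes_def M_d_def CM_def Pf_def Pg_def ..
  have sub1: "op_closure X Z (op_span CM) \<subseteq> op_closure X Z Pgf"
  proof -
    have "CM \<subseteq> op_closure X Z Pgf"
      unfolding CM_def using clos_compose[OF bPf bPg comps] by blast
    hence "op_span CM \<subseteq> op_closure X Z Pgf"
      using span_mono clos_span[OF gPgf] by blast
    hence "op_closure X Z (op_span CM) \<subseteq> op_closure X Z (op_closure X Z Pgf)" by (rule clos_mono)
    also have "\<dots> \<subseteq> op_closure X Z Pgf" by (rule clos_idem[OF bPgf])
    finally show ?thesis .
  qed
  have sub2: "op_closure X Z Pgf \<subseteq> op_closure X Z (op_span CM)"
  proof (rule clos_mono)
    have CPsub: "{(\<lambda>v. S (T v)) | S T. T \<in> Pf \<and> S \<in> Pg} \<subseteq> CM"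
      unfolding CM_def using clos_sub[OF bPf] clos_sub[OF bPg] by blast
    have "Pgf \<subseteq> op_span {(\<lambda>v. S (T v)) | S T. T \<in> Pf \<and> S \<in> Pg}"
    proof
      fix P assume "P \<in> Pgf"
      thus "P \<in> op_span {(\<lambda>v. S (T v)) | S T. T \<in> Pf \<and> S \<in> Pg}"
        unfolding Pf_def Pg_def Pgf_def using decomp[OF X(2) cX] by blast
    qed
    thus "Pgf \<subseteq> op_span CM" using span_mono[OF CPsub] by blast
  qed
  have main: "M_d X Z dgf = hat_otimes X Z (M_d X Y df) (M_d Y Z dg)"
    unfolding H using sub1 sub2 unfolding M_d_def Pgf_def by blast
  have main2: "M_d X Z mc = M_d X Z dgf"
    unfolding M_d_def using Pmc unfolding Pmc_def Pgf_def by simp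
  define dd :: "'a + 'a \<Rightarrow> 'a + 'a \<Rightarrow> real" where "dd = (\<lambda>a b. dX (projl a) (projr b))"
  have idle: "dist_f X dX dX Cid id (Inl x) (Inr x') \<le> dd (Inl x) (Inr x') + Cid / 2"
    if "x \<in> X" "x' \<in> X" for x x'
    using df_le[OF mX mX id that(1) that(1) that(2)] mo_refl[OF mX that(1)] unfolding dd_def by simp
  have idge: "dd (Inl x) (Inr x') \<le> dist_f X dX dX Cid id (Inl x) (Inr x') + Cid / 2"
    if "x \<in> X" "x' \<in> X" for x x'
    using df_ge[OF mX mX id that(1) that(2)] unfolding dd_def by simp
  have roe: "uniform_roe X dX = M_d X X dd"
    unfolding uniform_roe_def M_d_def finite_propagation_def dd_def by simp
  have idpart: "M_d X X (dist_f X dX dX Cid id) = uniform_roe X dX"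
    unfolding roe M_d_def using P_eq[where d="dist_f X dX dX Cid id" and d'=dd, OF idge idle] by simp
  show ?thesis using main main2 idpart by simp
qed


end
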